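(* Let $F$ be analytic in the unit disk $\mathbb{D}$. If $F f \in \mathcal{P}$ for every $f \in \mathcal{P}$ (that is, the weighted composition transformation $T_{F,\varphi}$ with $\varphi(z)=z$ preserves $\mathcal{P}$), then $F \equiv 1$.
   Context: $\mathbb{D}$ is the open unit disk. $\mathcal{P}$ (the Carathéodory class) is the set of all analytic functions $f$ on $\mathbb{D}$ with $\mathrm{Re}\, f>0$ on $\mathbb{D}$ and $f(0)=1$. For $F$ analytic in $\mathbb{D}$ and $\varphi$ an analytic self-map of $\mathbb{D}$, $T_{F,\varphi}(f)=F\cdot(f\circ\varphi)$; it preserves $\mathcal{P}$ if $T_{F,\varphi}(f)\in\mathcal{P}$ for all $f\in\mathcal{P}$. *)

theory Defs
  imports "HOL-Complex_Analysis.Complex_Analysis"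
begin

definition caratheodory_class :: "(complex \<Rightarrow> complex) set" where
  "caratheodory_class = {f. f holomorphic_on ball 0 1 \<and> (\<forall>z\<in>ball 0 1. Re (f z) > 0) \<and> f 0 = 1}"

end

theory Submission
  imports Defs
begin

lemma re_cayley_pos:
  fixes u :: complex assumes "norm u < 1" shows "Re ((1+u)/(1-u)) > 0"
proof -
  have ne: "1 - u \<noteq> 0" using assms by auto
  have "Re ((1+u)/(1-u)) = Re ((1+u)*cnj(1-u)) / (norm (1-u))^2"
    by (simp add: Re_divide cmod_power2)
  also have "Re ((1+u)*cnj(1-u)) = 1 - (norm u)^2"
    by (simp add: cmod_power2 algebra_simps power2_eq_square[symmetric])
  finally have eq: "Re ((1+u)/(1-u)) = (1 - (norm u)^2) / (norm (1-u))^2" .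
  have "(norm u)^2 < 1^2" using assms by (intro power_strict_mono) auto
  then show ?thesis unfolding eq using ne by simp
qed

lemma cara_mem:
  fixes a :: complex assumes "norm a \<le> 1"
  shows "(\<lambda>w. (1 + a*w)/(1 - a*w)) \<in> caratheodory_class"
proof -
  have lt: "norm (a*w) < 1" if "w \<in> ball 0 1" for w
  proof -
    have "norm (a*w) = norm a * norm w" by (simp add: norm_mult)
    also have "\<dots> \<le> norm w" using assms by (simp add: mult_left_le_one_le)
    also have "\<dots> < 1" using that by simp
    finally show ?thesis .
  qed
  have "(\<lambda>w. (1 + a*w)/(1 - a*w)) holomorphic_on ball 0 1"
  proof (intro holomorphic_intros)
    fix w :: complex assume "w \<in> ball 0 1"
    from lt[OF this] show "1 - a*w \<noteq> 0" by auto
  qed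
  moreover have "\<forall>w\<in>ball 0 1. Re ((1 + a*w)/(1 - a*w)) > 0"
    using lt re_cayley_pos by blast
  ultimately show ?thesis unfolding caratheodory_class_def by simp
qed

lemma re_formula:
  fixes w :: complex and t :: real
  shows "Re (w * ((1 + \<i>*t)/(1 - \<i>*t))) = (Re w*(1-t^2) - Im w*(2*t))/(1+t^2)"
proof -
  have d: "1 + t^2 > 0" by (simp add: add_pos_nonneg)
  have "(1 + \<i>*t)/(1 - \<i>*t) = Complex ((1-t^2)/(1+t^2)) (2*t/(1+t^2))"
    using d by (simp add: complex_eq_iff Re_divide Im_divide power2_eq_square field_simps)
  then have "Re (w * ((1 + \<i>*t)/(1 - \<i>*t))) = Re w * ((1-t^2)/(1+t^2)) - Im w * (2*t/(1+t^2))"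
    by simp
  also have "\<dots> = (Re w*(1-t^2) - Im w*(2*t))/(1+t^2)"
    by (simp add: diff_divide_distrib[symmetric] times_divide_eq_right)
  finally show ?thesis .
qed

lemma key_ineq:
  fixes F :: "complex \<Rightarrow> complex"
  assumes H: "\<forall>f\<in>caratheodory_class. (\<lambda>z. F z * f z) \<in> caratheodory_class"
    and z: "z \<in> ball 0 1" "z \<noteq> 0"
  shows "2*norm z*\<bar>Im (F z)\<bar> < Re (F z)*(1 - (norm z)^2)"
proof -
  have side: "Re (F z)*(1 - (norm z)^2) - Im (F z)*(2*(s*norm z)) > 0" if s: "s = 1 \<or> s = -1" for s :: real
  proof -
    define a where "a = \<i> * of_real (s*norm z) / z"
    have na: "norm a = 1" using z s by (auto simp: a_def norm_divide norm_mult)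
    have az: "a * z = \<i> * of_real (s*norm z)" using z by (simp add: a_def)
    have "(\<lambda>w. F w * ((1 + a*w)/(1 - a*w))) \<in> caratheodory_class"
      using H cara_mem[of a] na by auto
    hence "Re (F z * ((1 + a*z)/(1 - a*z))) > 0" using z unfolding caratheodory_class_def by auto
    hence "Re (F z * ((1 + \<i> * of_real (s*norm z))/(1 - \<i> * of_real (s*norm z)))) > 0" by (simp only: az)
    hence "(Re (F z)*(1-(s*norm z)^2) - Im (F z)*(2*(s*norm z)))/(1+(s*norm z)^2) > 0"
      by (simp only: re_formula)
    moreover have "(s*norm z)^2 = (norm z)^2" using s by auto
    moreover have "1 + (norm z)^2 > 0" by (simp add: add_pos_nonneg)
    ultimately show ?thesis by (simp add: zero_less_divide_iff)
  qed
  from side[of 1] side[of "-1"] show ?thesis by (auto simp: abs_if algebra_simps)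
qed

lemma im_ln_bound:
  fixes w :: complex assumes "Re w > 0"
  shows "\<bar>Im (Ln w)\<bar> \<le> \<bar>Im w\<bar> / Re w"
proof -
  define \<theta> where "\<theta> = Im (Ln w)"
  have th: "\<bar>\<theta>\<bar> < pi/2" using Re_Ln_pos_lt_imp assms \<theta>_def by blast
  have w0: "w \<noteq> 0" using assms by auto
  have e: "exp (Ln w) = w" using w0 by simp
  have re: "Re w = exp (Re (Ln w)) * cos \<theta>" using e Re_exp[of "Ln w"] \<theta>_def by simp
  have im: "Im w = exp (Re (Ln w)) * sin \<theta>" using e Im_exp[of "Ln w"] \<theta>_def by simp
  have "\<bar>\<theta>\<bar> \<le> \<bar>tan \<theta>\<bar>" using abs_tan_ge th by blast
  also have "\<bar>tan \<theta>\<bar> = \<bar>Im w\<bar> / Re w"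
  proof -
    have c: "cos \<theta> > 0" using assms re by (simp add: zero_less_mult_iff)
    show ?thesis using c re im by (simp add: tan_def abs_mult abs_divide)
  qed
  finally show ?thesis unfolding \<theta>_def .
qed

theorem proposition2p1:
  fixes F :: "complex \<Rightarrow> complex"
  assumes holF: "F holomorphic_on ball 0 1"
    and H: "\<forall>f\<in>caratheodory_class. (\<lambda>z. F z * f z) \<in> caratheodory_class"
  shows "\<forall>z\<in>ball 0 1. F z = 1"
proof -
  have "(\<lambda>z. F z * 1) \<in> caratheodory_class"
  proof -
    have "(\<lambda>w. (1 + 0*w)/(1 - 0*w)) \<in> caratheodory_class" by (rule cara_mem) simp
    then have "(\<lambda>w::complex. 1::complex) \<in> caratheodory_class" by simp
    from bspec[OF H this] show ?thesis by simp
  qed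
  hence Fpos: "\<And>z. z \<in> ball 0 1 \<Longrightarrow> Re (F z) > 0" and F0: "F 0 = 1"
    unfolding caratheodory_class_def by auto
  define G where "G = (\<lambda>z. Ln (F z))"
  have holG: "G holomorphic_on ball 0 1"
    unfolding G_def
  proof (rule holomorphic_on_Ln'[OF _ holF])
    fix z :: complex assume "z \<in> ball 0 1"
    then show "F z \<notin> \<real>\<^sub>\<le>\<^sub>0" using Fpos[of z] by (auto simp: complex_nonpos_Reals_iff)
  qed
  have bnd: "\<bar>Im (G z)\<bar> \<le> (1 - (norm z)^2) / (2*norm z)" if "z \<in> ball 0 1" "z \<noteq> 0" for z
  proof -
    have p: "Re (F z) > 0" using Fpos that by blast
    have "\<bar>Im (G z)\<bar> \<le> \<bar>Im (F z)\<bar> / Re (F z)" unfolding G_def using im_ln_bound p by blast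
    also have "\<dots> \<le> (1 - (norm z)^2) / (2*norm z)"
      using key_ineq[OF H that] p that by (simp add: divide_simps mult.commute mult.left_commute)
    finally show ?thesis .
  qed
  have bnd2: "\<bar>Im (G z0)\<bar> \<le> (1 - r^2) / (2*r)" if z0: "z0 \<in> ball 0 1" and r: "norm z0 < r" "r < 1" for z0 r
  proof -
    have r0: "r > 0" using r norm_ge_zero[of z0] by linarith
    have sub: "cball 0 r \<subseteq> ball (0::complex) 1" using r by auto
    have hol: "G holomorphic_on cball 0 r" using holG sub holomorphic_on_subset by blast
    have ct: "continuous_on (cball 0 r) G" using hol holomorphic_on_imp_continuous_on by blast
    have fr: "\<bar>Im (G z)\<bar> \<le> (1 - r^2) / (2*r)" if "z \<in> sphere 0 r" for z
      using bnd[of z] that r0 r by auto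
    have "Re ((\<lambda>z. - \<i> * G z) z0) \<le> (1 - r^2) / (2*r)"
    proof (rule maximum_real_frontier[where S="ball 0 r" and f="\<lambda>z. - \<i> * G z"])
      show "(\<lambda>z. - \<i> * G z) holomorphic_on interior (ball 0 r)"
        using hol by (auto intro!: holomorphic_intros intro: holomorphic_on_subset)
      show "continuous_on (closure (ball 0 r)) (\<lambda>z. - \<i> * G z)"
        using ct r0 by (auto intro!: continuous_intros)
      show "Re (- \<i> * G z) \<le> (1 - r^2) / (2*r)" if "z \<in> frontier (ball 0 r)" for z
        using fr[of z] that r0 by auto
    qed (use r in auto)
    moreover have "Re ((\<lambda>z. \<i> * G z) z0) \<le> (1 - r^2) / (2*r)"
    proof (rule maximum_real_frontier[where S="ball 0 r" and f="\<lambda>z. \<i> * G z"])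
      show "(\<lambda>z. \<i> * G z) holomorphic_on interior (ball 0 r)"
        using hol by (auto intro!: holomorphic_intros intro: holomorphic_on_subset)
      show "continuous_on (closure (ball 0 r)) (\<lambda>z. \<i> * G z)"
        using ct r0 by (auto intro!: continuous_intros)
      show "Re (\<i> * G z) \<le> (1 - r^2) / (2*r)" if "z \<in> frontier (ball 0 r)" for z
        using fr[of z] that r0 by auto
    qed (use r in auto)
    ultimately show ?thesis by auto
  qed
  have im0: "Im (G z0) = 0" if z0: "z0 \<in> ball 0 1" for z0
  proof -
    have lim: "((\<lambda>r::real. (1 - r^2) / (2*r)) \<longlongrightarrow> (1 - 1^2)/(2*1)) (at_left 1)"
      by (intro tendsto_intros) auto
    have ev: "eventually (\<lambda>r. \<bar>Im (G z0)\<bar> \<le> (1 - r^2) / (2*r)) (at_left (1::real))"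
    proof -
      have "norm z0 < 1" using z0 by simp
      then have "eventually (\<lambda>r. norm z0 < r \<and> r < 1) (at_left (1::real))"
        using eventually_at_left_real[of "norm z0" 1] by simp
      then show ?thesis by eventually_elim (use bnd2 z0 in auto)
    qed
    have "\<bar>Im (G z0)\<bar> \<le> (1 - 1^2)/(2*1)"
      using tendsto_le[OF trivial_limit_at_left_real lim tendsto_const ev] .
    then show ?thesis by simp
  qed
  have G0: "G 0 = 0" using F0 by (simp add: G_def)
  have const: "G constant_on ball 0 1"
  proof (rule ccontr)
    assume nc: "\<not> G constant_on ball 0 1"
    have "open (G ` ball 0 1)"
      using open_mapping_thm[OF holG open_ball connected_ball open_ball order_refl nc] .
    moreover have "0 \<in> G ` ball 0 1" using G0 by force
    ultimately obtain e where e: "e > 0" "ball 0 e \<subseteq> G ` ball 0 1"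
      by (meson open_contains_ball)
    have "\<i> * of_real (e/2) \<in> ball 0 e" using e by (simp add: norm_mult)
    then have "\<i> * of_real (e/2) \<in> G ` ball 0 1" using e(2) by (rule subsetD[rotated])
    then obtain w where w: "w \<in> ball 0 1" "\<i> * of_real (e/2) = G w" by (rule imageE)
    have "Im (G w) = Im (\<i> * of_real (e/2))" by (simp only: w(2))
    also have "\<dots> = e/2" by simp
    finally have "Im (G w) = e/2" .
    with im0[OF w(1)] e(1) show False by simp
  qed
  show ?thesis
  proof
    fix z :: complex assume z: "z \<in> ball 0 1"
    obtain c where c: "\<And>x. x \<in> ball 0 1 \<Longrightarrow> G x = c" using const unfolding constant_on_def by blast
    have "G z = G 0" using c[OF z] c[of 0] by simp
    hence Gz: "G z = 0" using G0 by simp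
    have "F z \<noteq> 0" using Fpos[OF z] by auto
    then have "exp (G z) = F z" unfolding G_def by (rule exp_Ln)
    then have "F z = exp (G z)" by simp
    also have "\<dots> = 1" using Gz by simp
    finally show "F z = 1" .
  qed
qed

end
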